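(* Let $N_w,N_d,L\ge 1$ be integers, $\sigma_i^2>0$, $N_0>0$, and let $\tilde A_{k,j}>0$ for $k\in[N_w]$, $j\in[N_d]$. Let the location $X$ be uniformly distributed a priori on $[L]$, and let the captured image $\mathbf{Y}=(Y_{k,j})$ and the global map sections $\mathbf{Y}^l=(Y^l_{k,j})$, $l\in[L]$, follow the Gaussian tile model described in the context. Then the maximum likelihood location estimate (the $\ell\in[L]$ maximizing $\Pr(X=\ell\mid \mathbf{Y}=\mathbf{y},\ \mathbf{Y}^l=\mathbf{y}^l,\ l\in[L])$) is $$\hat{\ell}=\operatorname*{arg\,min}_{\ell\in[L]}\ \sum_{k=1}^{N_w}\sum_{j=1}^{N_d}\frac{(y^\ell_{k,j}-y_{k,j})^2}{2\sigma_i^2+N_0/\tilde A_{k,j}}.$$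
   Context: Setting (vision-based vehicle localization by matching a captured road image to one of $L$ sections of a global map). Each image is a matrix of $N_w\times N_d$ tiles. The captured image is $\mathbf{Y}=\mathbf{A}+\mathbf{N}^i+\mathbf{N}^s$, i.e. $Y_{k,j}=a_{k,j}+n^i_{k,j}+n^s_{k,j}$, where $a_{k,j}$ is the underlying road signal, $n^i_{k,j}$ is intrinsic (environmental) noise, zero-mean Gaussian with variance $\sigma_i^2$, and $n^s_{k,j}$ is sensor noise, zero-mean Gaussian with variance $(\sigma^s_{k,j})^2=N_0/\tilde A_{k,j}$; here $\tilde A_{k,j}$ is the area of the projection of tile $(k,j)$ of the road onto the focal plane of the camera (for square road tiles of side $s$, camera height $h$, depression angle $\theta$, focal length $f$: $\tilde A_{k,j}=\frac{s}{2\cos\theta}\big[\frac{f^2h}{((j-1)s\cos\theta+h\sin\theta)^2}-\frac{f^2h}{(js\cos\theta+h\sin\theta)^2}\big]$). The $\ell$-th map section is $\mathbf{Y}^\ell=\mathbf{A}^\ell+\mathbf{N}^{i,\ell}$ with $n^{i,\ell}_{k,j}$ zero-mean Gaussian of variance $\sigma_i^2$; if the true location is $\ell$ then $\mathbf{A}=\mathbf{A}^\ell$. All noise terms are independent across tiles and of one another. Conditional on $X=\ell$, the captured image depends on the map only through $\mathbf{Y}^\ell$, and given $Y^\ell_{k,j}=y^\ell_{k,j}$ the underlying signal is modeled as $a^\ell_{k,j}\sim\mathcal N(y^\ell_{k,j},\sigma_i^2)$, independently across tiles. *)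

theory Defs
  imports "HOL-Probability.Probability"
begin

text \<open>Variances are given as variances; normal_density takes
  a standard deviation, hence the sqrt.
  Conditional on X = l and the map section value yl of a tile, the captured tile value is
  Y = a + n_i + n_s with a ~ N(yl, s2), n_i ~ N(0, s2), n_s ~ N(0, N0 / At) independent.\<close>

definition tile_lik :: "real \<Rightarrow> real \<Rightarrow> real \<Rightarrow> real \<Rightarrow> real \<Rightarrow> real" where
  "tile_lik s2 N0 At yl y =
     (\<integral>a. (\<integral>n. normal_density yl (sqrt s2) a * normal_density 0 (sqrt s2) n
                 * normal_density 0 (sqrt (N0 / At)) (y - a - n) \<partial>lborel) \<partial>lborel)"

text \<open>Conditional density of the whole captured image given X = l and the map
  (tiles independent), indices k in [Nw], j in [Nd].\<close>
definition image_lik ::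
  "nat \<Rightarrow> nat \<Rightarrow> real \<Rightarrow> real \<Rightarrow> (nat \<Rightarrow> nat \<Rightarrow> real) \<Rightarrow> (nat \<Rightarrow> nat \<Rightarrow> nat \<Rightarrow> real)
    \<Rightarrow> (nat \<Rightarrow> nat \<Rightarrow> real) \<Rightarrow> nat \<Rightarrow> real" where
  "image_lik Nw Nd s2 N0 At ym y l =
     (\<Prod>k\<in>{1..Nw}. \<Prod>j\<in>{1..Nd}. tile_lik s2 N0 (At k j) (ym l k j) (y k j))"

text \<open>Posterior Pr(X = l | Y = y, Y^m = ym m, m in [L]) under a uniform prior on [L]
  (Bayes' rule; the map likelihood does not depend on l and cancels).\<close>
definition posterior ::
  "nat \<Rightarrow> nat \<Rightarrow> nat \<Rightarrow> real \<Rightarrow> real \<Rightarrow> (nat \<Rightarrow> nat \<Rightarrow> real) \<Rightarrow> (nat \<Rightarrow> nat \<Rightarrow> nat \<Rightarrow> real)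
    \<Rightarrow> (nat \<Rightarrow> nat \<Rightarrow> real) \<Rightarrow> nat \<Rightarrow> real" where
  "posterior L Nw Nd s2 N0 At ym y l =
     (1 / real L * image_lik Nw Nd s2 N0 At ym y l) /
     (\<Sum>m\<in>{1..L}. 1 / real L * image_lik Nw Nd s2 N0 At ym y m)"

definition ml_metric ::
  "nat \<Rightarrow> nat \<Rightarrow> real \<Rightarrow> real \<Rightarrow> (nat \<Rightarrow> nat \<Rightarrow> real) \<Rightarrow> (nat \<Rightarrow> nat \<Rightarrow> nat \<Rightarrow> real)
    \<Rightarrow> (nat \<Rightarrow> nat \<Rightarrow> real) \<Rightarrow> nat \<Rightarrow> real" where
  "ml_metric Nw Nd s2 N0 At ym y l =
     (\<Sum>k=1..Nw. \<Sum>j=1..Nd. (ym l k j - y k j)^2 / (2 * s2 + N0 / At k j))"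

end

theory Submission
  imports Defs
begin

lemma conv_nn:
  assumes s: "0 < \<sigma>" and t: "0 < \<tau>"
  shows "(\<integral>\<^sup>+a. ennreal (normal_density \<mu> \<sigma> a * normal_density 0 \<tau> (x - a)) \<partial>lborel)
     = ennreal (normal_density \<mu> (sqrt (\<sigma>\<^sup>2 + \<tau>\<^sup>2)) x)"
proof -
  have "(\<integral>\<^sup>+a. ennreal (normal_density \<mu> \<sigma> a * normal_density 0 \<tau> (x - a)) \<partial>lborel)
     = (\<integral>\<^sup>+b. ennreal (normal_density \<mu> \<sigma> (\<mu> + 1 * b) * normal_density 0 \<tau> (x - (\<mu> + 1 * b))) \<partial>lborel)"
    using nn_integral_real_affine[of "\<lambda>a. ennreal (normal_density \<mu> \<sigma> a * normal_density 0 \<tau> (x - a))" 1 \<mu>] by simp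
  also have "\<dots> = (\<integral>\<^sup>+b. ennreal (normal_density 0 \<tau> ((x - \<mu>) - b) * normal_density 0 \<sigma> b) \<partial>lborel)"
    by (intro nn_integral_cong) (simp add: normal_density_def algebra_simps)
  also have "\<dots> = ennreal (normal_density 0 (sqrt (\<tau>\<^sup>2 + \<sigma>\<^sup>2)) (x - \<mu>))"
    using conv_normal_density_zero_mean[OF t s] by (simp add: fun_eq_iff)
  also have "\<dots> = ennreal (normal_density \<mu> (sqrt (\<sigma>\<^sup>2 + \<tau>\<^sup>2)) x)"
    by (simp add: normal_density_def add.commute)
  finally show ?thesis .
qed

lemma conv_int:
  assumes s: "0 < \<sigma>" and t: "0 < \<tau>"
  shows "(\<integral>a. normal_density \<mu> \<sigma> a * normal_density 0 \<tau> (x - a) \<partial>lborel)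
     = normal_density \<mu> (sqrt (\<sigma>\<^sup>2 + \<tau>\<^sup>2)) x"
proof -
  have "integrable lborel (\<lambda>a. normal_density \<mu> \<sigma> a * normal_density 0 \<tau> (x - a)) \<and>
     (\<integral>a. normal_density \<mu> \<sigma> a * normal_density 0 \<tau> (x - a) \<partial>lborel)
     = normal_density \<mu> (sqrt (\<sigma>\<^sup>2 + \<tau>\<^sup>2)) x"
    by (rule nn_integral_eq_integrable[THEN iffD1]) (auto simp: conv_nn[OF s t])
  then show ?thesis by blast
qed

lemma tile_lik_eq:
  assumes "s2 > 0" "N0 > 0" "At > 0"
  shows "tile_lik s2 N0 At yl y = normal_density yl (sqrt (2 * s2 + N0 / At)) y"
proof -
  have p1: "sqrt s2 > 0" "sqrt (N0 / At) > 0" using assms by auto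
  have inner: "(\<integral>n. normal_density yl (sqrt s2) a * normal_density 0 (sqrt s2) n
                 * normal_density 0 (sqrt (N0 / At)) (y - a - n) \<partial>lborel)
        = normal_density yl (sqrt s2) a * normal_density 0 (sqrt (N0/At + s2)) (y - a)" for a
  proof -
    have "(\<integral>n. normal_density yl (sqrt s2) a * normal_density 0 (sqrt s2) n
                 * normal_density 0 (sqrt (N0 / At)) (y - a - n) \<partial>lborel)
       = normal_density yl (sqrt s2) a * (\<integral>n. normal_density 0 (sqrt s2) n
                 * normal_density 0 (sqrt (N0 / At)) ((y - a) - n) \<partial>lborel)"
      by (simp add: mult.assoc)
    also have "\<dots> = normal_density yl (sqrt s2) a * normal_density 0 (sqrt ((sqrt s2)\<^sup>2 + (sqrt (N0/At))\<^sup>2)) (y - a)"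
      by (simp only: conv_int[OF p1])
    also have "\<dots> = normal_density yl (sqrt s2) a * normal_density 0 (sqrt (N0/At + s2)) (y - a)"
      using assms by (simp add: add.commute)
    finally show ?thesis .
  qed
  have p2: "sqrt (N0/At + s2) > 0" using assms by (simp add: add_pos_pos)
  have "tile_lik s2 N0 At yl y = (\<integral>a. normal_density yl (sqrt s2) a * normal_density 0 (sqrt (N0/At + s2)) (y - a) \<partial>lborel)"
    unfolding tile_lik_def inner ..
  also have "\<dots> = normal_density yl (sqrt ((sqrt s2)\<^sup>2 + (sqrt (N0/At + s2))\<^sup>2)) y"
    by (rule conv_int[OF p1(1) p2])
  also have "\<dots> = normal_density yl (sqrt (2 * s2 + N0 / At)) y"
    using assms p2 by (simp add: algebra_simps)
  finally show ?thesis .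
qed

lemma image_lik_eq:
  assumes "s2 > 0" "N0 > 0" "\<And>k j. k \<in> {1..Nw} \<Longrightarrow> j \<in> {1..Nd} \<Longrightarrow> At k j > 0"
  shows "image_lik Nw Nd s2 N0 At ym y l =
    (\<Prod>k\<in>{1..Nw}. \<Prod>j\<in>{1..Nd}. 1 / sqrt (2 * pi * (2 * s2 + N0 / At k j)))
    * exp (- ml_metric Nw Nd s2 N0 At ym y l / 2)"
proof -
  have V: "2 * s2 + N0 / At k j > 0" if "k \<in> {1..Nw}" "j \<in> {1..Nd}" for k j
    using assms(1,2) assms(3)[OF that] by (simp add: add_pos_pos)
  have "image_lik Nw Nd s2 N0 At ym y l = (\<Prod>k\<in>{1..Nw}. \<Prod>j\<in>{1..Nd}.
      1 / sqrt (2 * pi * (2 * s2 + N0 / At k j)) * exp (- ((ym l k j - y k j)^2 / (2 * s2 + N0 / At k j)) / 2))"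
    unfolding image_lik_def
  proof (intro prod.cong refl)
    fix k j assume kj: "k \<in> {1..Nw}" "j \<in> {1..Nd}"
    show "tile_lik s2 N0 (At k j) (ym l k j) (y k j) =
      1 / sqrt (2 * pi * (2 * s2 + N0 / At k j)) * exp (- ((ym l k j - y k j)^2 / (2 * s2 + N0 / At k j)) / 2)"
      using V[OF kj] assms(1,2) assms(3)[OF kj]
      by (simp add: tile_lik_eq normal_density_def power2_commute[of "y k j"])
  qed
  also have "\<dots> = (\<Prod>k\<in>{1..Nw}. \<Prod>j\<in>{1..Nd}. 1 / sqrt (2 * pi * (2 * s2 + N0 / At k j)))
    * exp (\<Sum>k=1..Nw. \<Sum>j=1..Nd. - ((ym l k j - y k j)^2 / (2 * s2 + N0 / At k j)) / 2)"
    by (simp only: exp_sum finite_atLeastAtMost prod.distrib)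
  also have "(\<Sum>k=1..Nw. \<Sum>j=1..Nd. - ((ym l k j - y k j)^2 / (2 * s2 + N0 / At k j)) / 2)
      = - ml_metric Nw Nd s2 N0 At ym y l / 2"
    unfolding ml_metric_def by (simp add: sum_negf sum_divide_distrib)
  finally show ?thesis .
qed

theorem proposition1:
  fixes Nw Nd L :: nat and s2 N0 :: real
    and At :: "nat \<Rightarrow> nat \<Rightarrow> real"
    and ym :: "nat \<Rightarrow> nat \<Rightarrow> nat \<Rightarrow> real"
    and y :: "nat \<Rightarrow> nat \<Rightarrow> real"
    and l :: nat
  assumes "Nw \<ge> 1" "Nd \<ge> 1" "L \<ge> 1" "s2 > 0" "N0 > 0"
    and "\<And>k j. k \<in> {1..Nw} \<Longrightarrow> j \<in> {1..Nd} \<Longrightarrow> At k j > 0"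
    and "l \<in> {1..L}"
  shows "(\<forall>m\<in>{1..L}. posterior L Nw Nd s2 N0 At ym y m \<le> posterior L Nw Nd s2 N0 At ym y l)
     \<longleftrightarrow> (\<forall>m\<in>{1..L}. ml_metric Nw Nd s2 N0 At ym y l \<le> ml_metric Nw Nd s2 N0 At ym y m)"
proof -
  define C where "C = (\<Prod>k\<in>{1..Nw}. \<Prod>j\<in>{1..Nd}. 1 / sqrt (2 * pi * (2 * s2 + N0 / At k j)))"
  define M where "M = ml_metric Nw Nd s2 N0 At ym y"
  define P where "P = image_lik Nw Nd s2 N0 At ym y"
  have V: "2 * s2 + N0 / At k j > 0" if "k \<in> {1..Nw}" "j \<in> {1..Nd}" for k j
    using assms(4,5) assms(6)[OF that] by (simp add: add_pos_pos)
  have Cpos: "C > 0" unfolding C_def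
    by (intro prod_pos) (use V in auto)
  have Peq: "P m = C * exp (- M m / 2)" for m
    unfolding P_def C_def M_def by (rule image_lik_eq[OF assms(4,5,6)])
  have Ppos: "P m > 0" for m using Cpos by (simp add: Peq)
  define S where "S = (\<Sum>m\<in>{1..L}. 1 / real L * P m)"
  have Spos: "S > 0" unfolding S_def
    using assms(3) Ppos by (intro sum_pos) auto
  have post: "posterior L Nw Nd s2 N0 At ym y m = (1 / real L * P m) / S" for m
    unfolding posterior_def P_def S_def ..
  have Lpos: "1 / real L > 0" using assms(3) by simp
  have key: "posterior L Nw Nd s2 N0 At ym y m \<le> posterior L Nw Nd s2 N0 At ym y l
     \<longleftrightarrow> M l \<le> M m" for m
  proof -
    have "posterior L Nw Nd s2 N0 At ym y m \<le> posterior L Nw Nd s2 N0 At ym y l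
       \<longleftrightarrow> P m \<le> P l"
      proof -
        have "\<not> real L * S < 0" using Spos assms(3) by (simp add: not_less)
        then show ?thesis unfolding post using Spos Lpos
          by (simp add: divide_le_cancel mult_le_cancel_left_pos)
      qed
    also have "\<dots> \<longleftrightarrow> M l \<le> M m"
      using Cpos by (simp add: Peq mult_le_cancel_left_pos)
    finally show ?thesis .
  qed
  show ?thesis using key unfolding M_def by simp
qed

end
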